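(* Let $G$ be a finite simple graph on $n$ vertices with at least one edge, and let $\lambda_{2}$ and $\lambda_{n}$ be the second smallest and the largest Laplacian eigenvalues of $G$, respectively. Then \[ \mathrm{tw}(G) \ge \frac{2n \lambda_{2}}{3\lambda_{n} - \lambda_{2}} - 1, \] where $\mathrm{tw}(G)$ is the treewidth of $G$.
   Context: For a graph $G=(V,E)$ with $n$ vertices, the Laplacian matrix $L \in \mathbb{Z}^{V\times V}$ is given by $L(u,u)=\deg(u)$, $L(u,v)=-1$ if $\{u,v\}\in E$, and $L(u,v)=0$ otherwise (for $u \ne v$). The Laplacian eigenvalues are the eigenvalues of $L$, listed in non-decreasing order as $\lambda_1 \le \lambda_2 \le \dots \le \lambda_n$. Treewidth is the standard notion: the minimum, over all tree decompositions of $G$, of the maximum bag size minus one. *)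

theory Defs
  imports "Jordan_Normal_Form.Char_Poly" "HOL-Library.Multiset"
begin

definition simple_graph :: "nat \<Rightarrow> (nat \<Rightarrow> nat \<Rightarrow> bool) \<Rightarrow> bool" where
  "simple_graph n E \<longleftrightarrow> (\<forall>i j. E i j \<longrightarrow> i < n \<and> j < n \<and> i \<noteq> j \<and> E j i)"

definition degree_in :: "nat \<Rightarrow> (nat \<Rightarrow> nat \<Rightarrow> bool) \<Rightarrow> nat \<Rightarrow> nat" where
  "degree_in n E u = card {v. v < n \<and> E u v}"

definition laplacian :: "nat \<Rightarrow> (nat \<Rightarrow> nat \<Rightarrow> bool) \<Rightarrow> real mat" where
  "laplacian n E = mat n n (\<lambda>(u, v). if u = v then real (degree_in n E u)
                                     else if E u v then -1 else 0)"

(* Laplacian eigenvalues with multiplicity (roots of the characteristic polynomial),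
   listed in non-decreasing order: lambda_1 = ! 0, ..., lambda_n = ! (n-1). *)
definition laplacian_eigenvalues :: "nat \<Rightarrow> (nat \<Rightarrow> nat \<Rightarrow> bool) \<Rightarrow> real list" where
  "laplacian_eigenvalues n E = sorted_list_of_multiset (proots (char_poly (laplacian n E)))"

definition is_tree :: "nat \<Rightarrow> (nat \<Rightarrow> nat \<Rightarrow> bool) \<Rightarrow> bool" where
  "is_tree m T \<longleftrightarrow> m \<ge> 1 \<and> simple_graph m T
     \<and> (\<forall>x y. x < m \<longrightarrow> y < m \<longrightarrow> T\<^sup>*\<^sup>* x y)
     \<and> card {(i, j). T i j \<and> i < j} = m - 1"

definition connected_in :: "(nat \<Rightarrow> nat \<Rightarrow> bool) \<Rightarrow> nat set \<Rightarrow> bool" where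
  "connected_in T S \<longleftrightarrow> (\<forall>x\<in>S. \<forall>y\<in>S. (\<lambda>a b. T a b \<and> a \<in> S \<and> b \<in> S)\<^sup>*\<^sup>* x y)"

definition tree_decomposition ::
  "nat \<Rightarrow> (nat \<Rightarrow> nat \<Rightarrow> bool) \<Rightarrow> nat \<Rightarrow> (nat \<Rightarrow> nat \<Rightarrow> bool) \<Rightarrow> (nat \<Rightarrow> nat set) \<Rightarrow> bool" where
  "tree_decomposition n E m T B \<longleftrightarrow> is_tree m T
     \<and> (\<forall>t<m. B t \<subseteq> {0..<n})
     \<and> (\<forall>v<n. \<exists>t<m. v \<in> B t)
     \<and> (\<forall>u v. E u v \<longrightarrow> (\<exists>t<m. u \<in> B t \<and> v \<in> B t))
     \<and> (\<forall>v<n. connected_in T {t. t < m \<and> v \<in> B t})"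

definition treewidth :: "nat \<Rightarrow> (nat \<Rightarrow> nat \<Rightarrow> bool) \<Rightarrow> nat" where
  "treewidth n E = (LEAST k. \<exists>m T B. tree_decomposition n E m T B \<and> (\<forall>t<m. card (B t) \<le> k + 1))"

end

theory Submission
  imports Defs "Jordan_Normal_Form.Schur_Decomposition"
begin


lemma real_sym_eigen:
  fixes A :: "real mat"
  assumes A: "A \<in> carrier_mat n n" and n: "n > 0" and sym: "transpose_mat A = A"
  shows "\<exists>e. eigenvalue A e"
proof -
  let ?Ac = "map_mat complex_of_real A"
  have Ac: "?Ac \<in> carrier_mat n n" using A by simp
  have cp: "char_poly ?Ac = map_poly complex_of_real (char_poly A)"
    by (rule of_real_hom.char_poly_hom[OF A])
  have deg: "degree (char_poly ?Ac) = n" using degree_monic_char_poly[OF Ac] by simp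
  have "\<exists>z. poly (char_poly ?Ac) z = 0"
  proof (rule fundamental_theorem_of_algebra_alt)
    show "\<not> (\<exists>a l. a \<noteq> 0 \<and> l = 0 \<and> char_poly ?Ac = pCons a l)"
      using deg n by auto
  qed
  then obtain z where z: "poly (char_poly ?Ac) z = 0" by blast
  then have "eigenvalue ?Ac z" by (simp add: eigenvalue_root_char_poly[OF Ac])
  then obtain v where ev: "eigenvector ?Ac v z" by (auto simp: eigenvalue_def)
  hence v: "v \<in> carrier_vec n" "v \<noteq> 0\<^sub>v n" "?Ac *\<^sub>v v = z \<cdot>\<^sub>v v" using Ac by (auto simp: eigenvector_def)
  have Av: "(?Ac *\<^sub>v v) $ i = (\<Sum>j=0..<n. complex_of_real (A $$ (i,j)) * v $ j)" if "i < n" for i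
    using that A v(1) by (auto simp: scalar_prod_def)
  define s where "s = (\<Sum>i=0..<n. v$i * cnj (v$i))"
  have s: "s = complex_of_real (\<Sum>i=0..<n. (cmod (v$i))\<^sup>2)"
    unfolding s_def of_real_sum by (rule sum.cong, simp, metis complex_norm_square)
  obtain i0 where i0: "i0 < n" "v $ i0 \<noteq> 0"
    using v(1,2) by (metis eq_vecI carrier_vecD index_zero_vec(1) index_zero_vec(2))
  have "(\<Sum>i=0..<n. (cmod (v$i))\<^sup>2) > 0"
  proof -
    have "(\<Sum>i=0..<n. (cmod (v$i))\<^sup>2) \<ge> (cmod (v$i0))\<^sup>2"
      by (rule member_le_sum) (use i0 in auto)
    moreover have "(cmod (v$i0))\<^sup>2 > 0" using i0 by simp
    ultimately show ?thesis by linarith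
  qed
  hence s0: "s \<noteq> 0" unfolding s of_real_eq_0_iff by linarith
  have eq1: "(\<Sum>i=0..<n. (?Ac *\<^sub>v v)$i * cnj (v$i)) = z * s"
    unfolding s_def using v(1,3) by (simp add: sum_distrib_left mult.assoc)
  have eq2: "(\<Sum>i=0..<n. v$i * cnj ((?Ac *\<^sub>v v)$i)) = cnj z * s"
    unfolding s_def using v(1,3) by (simp add: sum_distrib_left mult.assoc mult.left_commute)
  have "(\<Sum>i=0..<n. (?Ac *\<^sub>v v)$i * cnj (v$i)) = (\<Sum>i=0..<n. \<Sum>j=0..<n. complex_of_real (A $$ (i,j)) * v $ j * cnj (v$i))"
    by (rule sum.cong, simp, simp add: Av sum_distrib_right)
  also have "\<dots> = (\<Sum>j=0..<n. \<Sum>i=0..<n. complex_of_real (A $$ (i,j)) * v $ j * cnj (v$i))"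
    by (rule sum.swap)
  also have "\<dots> = (\<Sum>j=0..<n. \<Sum>i=0..<n. complex_of_real (A $$ (j,i)) * v $ j * cnj (v$i))"
  proof (intro sum.cong refl)
    fix i j assume "i \<in> {0..<n}" "j \<in> {0..<n}"
    hence "A $$ (i,j) = A $$ (j,i)" using A sym
      by (metis carrier_matD(1) carrier_matD(2) atLeastLessThan_iff index_transpose_mat(1))
    thus "complex_of_real (A $$ (i,j)) * v $ j * cnj (v$i) = complex_of_real (A $$ (j,i)) * v $ j * cnj (v$i)"
      by simp
  qed
  also have "\<dots> = (\<Sum>j=0..<n. v$j * cnj ((?Ac *\<^sub>v v)$j))"
    by (rule sum.cong, simp, simp add: Av sum_distrib_left mult_ac)
  finally have "z * s = cnj z * s" using eq1 eq2 by simp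
  hence zz: "z = cnj z" using s0 by simp
  hence zr: "z = complex_of_real (Re z)"
    by (metis complex_cnj_cancel_iff complex_is_Real_iff Reals_cases of_real_Re cnj.simps(2) complex_eq_iff neg_equal_zero)
  have "poly (map_poly complex_of_real (char_poly A)) (complex_of_real (Re z)) = 0"
    using z zr cp by simp
  hence "poly (char_poly A) (Re z) = 0" by simp
  thus ?thesis using eigenvalue_root_char_poly[OF A] by blast
qed

lemma quad_sym:
  fixes A :: "real mat"
  assumes A: "A \<in> carrier_mat n n" and sym: "transpose_mat A = A"
    and x: "x \<in> carrier_vec n" and y: "y \<in> carrier_vec n"
  shows "x \<bullet> (A *\<^sub>v y) = y \<bullet> (A *\<^sub>v x)"
proof -
  have Aij: "A $$ (i,j) = A $$ (j,i)" if "i < n" "j < n" for i j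
    using A sym that by (metis carrier_matD(1) carrier_matD(2) index_transpose_mat(1))
  have "x \<bullet> (A *\<^sub>v y) = (\<Sum>i=0..<n. \<Sum>j=0..<n. x$i * A $$ (i,j) * y$j)"
    using A x y by (auto simp: scalar_prod_def sum_distrib_left mult_ac intro!: sum.cong)
  also have "\<dots> = (\<Sum>j=0..<n. \<Sum>i=0..<n. x$i * A $$ (i,j) * y$j)" by (rule sum.swap)
  also have "\<dots> = y \<bullet> (A *\<^sub>v x)"
    using A x y Aij by (auto simp: scalar_prod_def sum_distrib_left mult_ac intro!: sum.cong)
  finally show ?thesis .
qed

lemma self_sprod_pos:
  fixes v :: "real vec"
  assumes v: "v \<in> carrier_vec n" "v \<noteq> 0\<^sub>v n"
  shows "v \<bullet> v > 0"
proof -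
  obtain i0 where i0: "i0 < n" "v $ i0 \<noteq> 0"
    using v by (metis eq_vecI carrier_vecD index_zero_vec(1) index_zero_vec(2))
  have "v \<bullet> v = (\<Sum>i=0..<n. (v$i)\<^sup>2)" using v by (simp add: scalar_prod_def power2_eq_square)
  also have "\<dots> \<ge> (v$i0)\<^sup>2" by (rule member_le_sum) (use i0 in auto)
  finally show ?thesis using i0 by (smt (verit) zero_less_power2)
qed

lemma self_sprod_nonneg:
  fixes v :: "real vec"
  shows "v \<bullet> v \<ge> 0"
  by (simp add: scalar_prod_def power2_eq_square[symmetric] sum_nonneg)

definition diagm :: "real list \<Rightarrow> real mat" where
  "diagm ds = mat (length ds) (length ds) (\<lambda>(i,j). if i = j then ds ! i else 0)"

lemma bd_mult:
  assumes "A1 \<in> carrier_mat 1 1" "A2 \<in> carrier_mat 1 1" "D1 \<in> carrier_mat n n" "D2 \<in> carrier_mat n n"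
  shows "four_block_mat A1 (0\<^sub>m 1 n) (0\<^sub>m n 1) D1 * four_block_mat A2 (0\<^sub>m 1 n) (0\<^sub>m n 1) D2
       = four_block_mat (A1 * A2) (0\<^sub>m 1 n) (0\<^sub>m n 1) (D1 * D2 :: real mat)"
  using mult_four_block_mat[OF assms(1) zero_carrier_mat zero_carrier_mat assms(3) assms(2) zero_carrier_mat zero_carrier_mat assms(4)] assms by simp

lemma sym_diag:
  fixes A :: "real mat"
  assumes "A \<in> carrier_mat n n" "transpose_mat A = A"
  shows "\<exists>U ds. U \<in> carrier_mat n n \<and> length ds = n \<and> transpose_mat U * U = 1\<^sub>m n
     \<and> U * transpose_mat U = 1\<^sub>m n \<and> transpose_mat U * A * U = diagm ds"
  using assms
proof (induction n arbitrary: A)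
  case 0
  show ?case
    by (rule exI[of _ "1\<^sub>m 0"], rule exI[of _ "[]"]) (use 0 in \<open>auto simp: diagm_def intro!: eq_matI\<close>)
next
  case (Suc n A)
  let ?N = "Suc n"
  have A: "A \<in> carrier_mat ?N ?N" and sym: "transpose_mat A = A" using Suc.prems by auto
  obtain e where "eigenvalue A e" using real_sym_eigen[OF A _ sym] by auto
  then obtain v where "eigenvector A v e" by (auto simp: eigenvalue_def)
  hence v: "v \<in> carrier_vec ?N" "v \<noteq> 0\<^sub>v ?N" "A *\<^sub>v v = e \<cdot>\<^sub>v v"
    using A by (auto simp: eigenvector_def)
  have vv: "v \<bullet> v > 0" by (rule self_sprod_pos[OF v(1,2)])
  define v1 where "v1 = (1 / sqrt (v \<bullet> v)) \<cdot>\<^sub>v v"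
  have v1c: "v1 \<in> carrier_vec ?N" using v unfolding v1_def by simp
  have v11: "v1 \<bullet> v1 = 1"
    unfolding v1_def using v(1) vv by (simp add: real_sqrt_mult[symmetric] )
  have Av1: "A *\<^sub>v v1 = e \<cdot>\<^sub>v v1"
    unfolding v1_def using mult_mat_vec[OF A v(1)] v(3) by (simp add: smult_smult_assoc mult.commute)
  have v10: "v1 \<noteq> 0\<^sub>v ?N" using v11 by auto
  interpret cof_vec_space ?N "TYPE(real)" .
  define b where "b = basis_completion v1"
  from basis_completion[OF v1c v10, folded b_def]
  have bc: "set b \<subseteq> carrier_vec ?N" "distinct b" "\<not> lin_dep (set b)" "length b = ?N" "hd b = v1"
    by auto
  then obtain vs where bv: "b = v1 # vs" by (cases b) auto
  define ws where "ws = gram_schmidt ?N b"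
  from gram_schmidt_result[OF bc(1,2,3) ws_def]
  have ws: "set ws \<subseteq> carrier_vec ?N" "corthogonal ws" "length ws = ?N" using bc by auto
  have hdws: "hd ws = v1" unfolding ws_def bv using gram_schmidt_hd[OF v1c] by simp
  have ws0: "ws ! 0 = v1" using hdws ws(3) by (metis hd_conv_nth list.size(3) nat.distinct(1))
  have wsc: "ws ! i \<in> carrier_vec ?N" if "i < ?N" for i using ws that by auto
  have wsort: "ws ! i \<bullet> ws ! j = 0 \<longleftrightarrow> i \<noteq> j" if "i < ?N" "j < ?N" for i j
    using corthogonalD[OF ws(2), of i j] that ws(3) by simp
  have wspos: "ws ! i \<bullet> ws ! i > 0" if "i < ?N" for i
    using wsort[OF that that] self_sprod_nonneg[of "ws ! i"] by linarith
  define ws' where "ws' = map (\<lambda>w. (1 / sqrt (w \<bullet> w)) \<cdot>\<^sub>v w) ws"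
  have ws'len: "length ws' = ?N" unfolding ws'_def using ws by simp
  have ws'i: "ws' ! i = (1 / sqrt (ws ! i \<bullet> ws ! i)) \<cdot>\<^sub>v ws ! i" if "i < ?N" for i
    unfolding ws'_def using that ws(3) by simp
  have ws'c: "ws' ! i \<in> carrier_vec ?N" if "i < ?N" for i using ws'i[OF that] wsc[OF that] by simp
  have ws'on: "ws' ! i \<bullet> ws' ! j = (if i = j then 1 else 0)" if "i < ?N" "j < ?N" for i j
  proof -
    have "ws' ! i \<bullet> ws' ! j = (1 / sqrt (ws ! i \<bullet> ws ! i)) * (1 / sqrt (ws ! j \<bullet> ws ! j)) * (ws ! i \<bullet> ws ! j)"
      unfolding ws'i[OF that(1)] ws'i[OF that(2)] using wsc[OF that(1)] wsc[OF that(2)] by simp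
    thus ?thesis using wsort[OF that] wspos[OF that(1)]
      by (auto simp: real_sqrt_mult[symmetric])
  qed
  have ws'0: "ws' ! 0 = v1" using ws'i[of 0] ws0 v11 by simp
  define W where "W = mat_of_cols ?N ws'"
  have W: "W \<in> carrier_mat ?N ?N" unfolding W_def using ws'len mat_of_cols_carrier(1)[of ?N ws'] by simp
  have Wt: "transpose_mat W \<in> carrier_mat ?N ?N" using W by simp
  have colW: "col W i = ws' ! i" if "i < ?N" for i
    unfolding W_def using col_mat_of_cols[of i ws' ?N] that ws'len ws'c by simp
  have WtW: "transpose_mat W * W = 1\<^sub>m ?N"
    by (rule eq_matI, insert W colW ws'on, auto)
  have WWt: "W * transpose_mat W = 1\<^sub>m ?N"
    by (rule mat_mult_left_right_inverse[OF Wt W WtW])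
  define A' where "A' = transpose_mat W * A * W"
  have A'c: "A' \<in> carrier_mat ?N ?N" unfolding A'_def using W A by simp
  have A'ent: "A' $$ (i,j) = ws' ! i \<bullet> (A *\<^sub>v ws' ! j)" if "i < ?N" "j < ?N" for i j
  proof -
    have "A' = transpose_mat W * (A * W)" unfolding A'_def using W A by simp
    hence "A' $$ (i,j) = row (transpose_mat W) i \<bullet> col (A * W) j" using that W A by simp
    also have "row (transpose_mat W) i = ws' ! i" using that W colW by simp
    also have "col (A * W) j = A *\<^sub>v col W j" using col_mult2[OF A W that(2)] .
    also have "col W j = ws' ! j" using colW that by simp
    finally show ?thesis .
  qed
  have A'sym: "A' $$ (i,j) = A' $$ (j,i)" if "i < ?N" "j < ?N" for i j
    unfolding A'ent[OF that] A'ent[OF that(2,1)]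
    by (rule quad_sym[OF A sym ws'c[OF that(1)] ws'c[OF that(2)]])
  have A'0: "A' $$ (i,0) = (if i = 0 then e else 0)" if "i < ?N" for i
    unfolding A'ent[OF that zero_less_Suc] ws'0 Av1 using ws'on[OF that zero_less_Suc] ws'c[OF that] v1c ws'0
    by simp
  define A3 where "A3 = mat n n (\<lambda>(i,j). A' $$ (Suc i, Suc j))"
  have A3c: "A3 \<in> carrier_mat n n" unfolding A3_def by simp
  have A3sym: "transpose_mat A3 = A3"
    by (rule eq_matI, auto simp: A3_def A'sym)
  obtain U3 ds3 where U3: "U3 \<in> carrier_mat n n" "length ds3 = n" "transpose_mat U3 * U3 = 1\<^sub>m n"
    "U3 * transpose_mat U3 = 1\<^sub>m n" "transpose_mat U3 * A3 * U3 = diagm ds3"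
    using Suc.IH[OF A3c A3sym] by blast
  have A'blk: "A' = four_block_mat (mat 1 1 (\<lambda>_. e)) (0\<^sub>m 1 n) (0\<^sub>m n 1) A3"
  proof (rule eq_matI)
    fix i j assume ij: "i < dim_row (four_block_mat (mat 1 1 (\<lambda>_. e)) (0\<^sub>m 1 n) (0\<^sub>m n 1) A3)"
      "j < dim_col (four_block_mat (mat 1 1 (\<lambda>_. e)) (0\<^sub>m 1 n) (0\<^sub>m n 1) A3)"
    hence ij': "i < ?N" "j < ?N" using A3c by auto
    show "A' $$ (i, j) = four_block_mat (mat 1 1 (\<lambda>_. e)) (0\<^sub>m 1 n) (0\<^sub>m n 1) A3 $$ (i, j)"
    proof (cases "i = 0")
      case True
      then show ?thesis using A'0[OF ij'(2)] A'sym[OF ij'] ij' A3c by auto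
    next
      case False
      then show ?thesis using A'0[OF ij'(1)] ij' A3c
        by (cases j, auto simp: A3_def)
    qed
  qed (use A'c A3c in auto)
  define Bk where "Bk = four_block_mat (1\<^sub>m 1) (0\<^sub>m 1 n) (0\<^sub>m n 1) U3"
  have Bk: "Bk \<in> carrier_mat ?N ?N" unfolding Bk_def using U3(1) by auto
  have BkT: "transpose_mat Bk = four_block_mat (1\<^sub>m 1) (0\<^sub>m 1 n) (0\<^sub>m n 1) (transpose_mat U3)"
    unfolding Bk_def by (subst transpose_four_block_mat, insert U3(1), auto)
  have BkTc: "transpose_mat Bk \<in> carrier_mat ?N ?N" using Bk by simp
  have BkTBk: "transpose_mat Bk * Bk = 1\<^sub>m ?N"
  proof -
    have "transpose_mat Bk * Bk = four_block_mat (1\<^sub>m 1) (0\<^sub>m 1 n) (0\<^sub>m n 1) (transpose_mat U3) * four_block_mat (1\<^sub>m 1) (0\<^sub>m 1 n) (0\<^sub>m n 1) U3"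
      by (simp only: BkT, simp add: Bk_def)
    also have "\<dots> = four_block_mat (1\<^sub>m 1) (0\<^sub>m 1 n) (0\<^sub>m n 1) (1\<^sub>m n)"
      using U3 by (subst bd_mult, auto)
    also have "\<dots> = 1\<^sub>m ?N" using four_block_one_mat[of 1 n] by simp
    finally show ?thesis .
  qed
  define U where "U = W * Bk"
  have Uc: "U \<in> carrier_mat ?N ?N" unfolding U_def using W Bk by simp
  have UT: "transpose_mat (W * Bk) = transpose_mat Bk * transpose_mat W"
    by (rule transpose_mult[OF W Bk])
  have UtU: "transpose_mat U * U = 1\<^sub>m ?N"
  proof -
    have "transpose_mat U * U = transpose_mat Bk * (transpose_mat W * W) * Bk"
      unfolding UT U_def using W Bk Wt BkTc by (simp add: assoc_mult_mat[of _ ?N ?N _ ?N _ ?N])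
    also have "\<dots> = 1\<^sub>m ?N" unfolding WtW using BkTBk BkTc by simp
    finally show ?thesis .
  qed
  have UUt: "U * transpose_mat U = 1\<^sub>m ?N"
    by (rule mat_mult_left_right_inverse[OF _ Uc UtU], use Uc in simp)
  have "transpose_mat U * A * U = transpose_mat Bk * A' * Bk"
    unfolding UT U_def A'_def using W Bk Wt BkTc A by (simp add: assoc_mult_mat[of _ ?N ?N _ ?N _ ?N])
  also have "\<dots> = four_block_mat (1\<^sub>m 1) (0\<^sub>m 1 n) (0\<^sub>m n 1) (transpose_mat U3) * four_block_mat (mat 1 1 (\<lambda>_. e)) (0\<^sub>m 1 n) (0\<^sub>m n 1) A3 * four_block_mat (1\<^sub>m 1) (0\<^sub>m 1 n) (0\<^sub>m n 1) U3"
    by (simp only: BkT A'blk, simp add: Bk_def)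
  also have "\<dots> = four_block_mat (1\<^sub>m 1 * mat 1 1 (\<lambda>_. e)) (0\<^sub>m 1 n) (0\<^sub>m n 1) (transpose_mat U3 * A3) * four_block_mat (1\<^sub>m 1) (0\<^sub>m 1 n) (0\<^sub>m n 1) U3"
    using U3(1) A3c by (subst bd_mult, auto)
  also have "\<dots> = four_block_mat (1\<^sub>m 1 * mat 1 1 (\<lambda>_. e) * 1\<^sub>m 1) (0\<^sub>m 1 n) (0\<^sub>m n 1) (transpose_mat U3 * A3 * U3)"
    using U3(1) A3c by (subst bd_mult, auto)
  also have "\<dots> = four_block_mat (mat 1 1 (\<lambda>_. e)) (0\<^sub>m 1 n) (0\<^sub>m n 1) (transpose_mat U3 * A3 * U3)"
    by simp
  also have "\<dots> = diagm (e # ds3)"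
    unfolding U3(5) by (rule eq_matI, auto simp: diagm_def U3(2) nth_Cons')
  finally have "transpose_mat U * A * U = diagm (e # ds3)" .
  thus ?case using Uc UtU UUt U3(2) by (intro exI[of _ U] exI[of _ "e # ds3"]) auto
qed



definition ER :: "('a \<times> 'a) set \<Rightarrow> 'a \<Rightarrow> 'a \<Rightarrow> bool" where
  "ER F = (\<lambda>x y. (x,y) \<in> F \<or> (y,x) \<in> F)"

definition cls :: "'a set \<Rightarrow> ('a \<times> 'a) set \<Rightarrow> 'a \<Rightarrow> 'a set" where
  "cls N F x = {y \<in> N. (ER F)\<^sup>*\<^sup>* x y}"

lemma rtranclp_sym':
  assumes sym: "\<And>x y. r x y \<Longrightarrow> r y x" and "r\<^sup>*\<^sup>* x y"
  shows "r\<^sup>*\<^sup>* y x"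
  using assms(2)
proof (induction rule: rtranclp_induct)
  case base then show ?case by simp
next
  case (step y z)
  then show ?case by (meson converse_rtranclp_into_rtranclp sym)
qed

lemma ER_sym: "ER F x y \<Longrightarrow> ER F y x" unfolding ER_def by auto

lemma ER_rt_sym: "(ER F)\<^sup>*\<^sup>* x y \<Longrightarrow> (ER F)\<^sup>*\<^sup>* y x"
  using rtranclp_sym'[of "ER F"] ER_sym by metis

lemma cls_eq: assumes "(ER F)\<^sup>*\<^sup>* a b" shows "cls N F a = cls N F b"
  unfolding cls_def using assms ER_rt_sym[OF assms]
  by (auto intro: rtranclp_trans)

lemma card_image_factor:
  assumes "finite S" and "\<And>x y. x \<in> S \<Longrightarrow> y \<in> S \<Longrightarrow> g x = g y \<Longrightarrow> f x = f y"
  shows "card (f ` S) \<le> card (g ` S)"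
proof -
  define h where "h = (\<lambda>D. f (SOME x. x \<in> S \<and> g x = D))"
  have "f ` S = h ` (g ` S)"
  proof (intro equalityI subsetI)
    fix z assume "z \<in> f ` S"
    then obtain x where x: "x \<in> S" "z = f x" by auto
    have "\<exists>x'. x' \<in> S \<and> g x' = g x" using x by auto
    hence "(SOME x'. x' \<in> S \<and> g x' = g x) \<in> S \<and> g (SOME x'. x' \<in> S \<and> g x' = g x) = g x"
      by (rule someI_ex)
    hence "h (g x) = f x" unfolding h_def using assms(2) x(1) by blast
    thus "z \<in> h ` (g ` S)" using x by (metis imageI)
  next
    fix z assume "z \<in> h ` (g ` S)"
    then obtain x where x: "x \<in> S" "z = h (g x)" by auto
    have "\<exists>x'. x' \<in> S \<and> g x' = g x" using x by auto
    hence "(SOME x'. x' \<in> S \<and> g x' = g x) \<in> S \<and> g (SOME x'. x' \<in> S \<and> g x' = g x) = g x"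
      by (rule someI_ex)
    thus "z \<in> f ` S" unfolding x h_def by auto
  qed
  thus ?thesis using card_image_le[of "g ` S" h] assms(1) by simp
qed

lemma ER_insert_reach:
  assumes "(ER (insert (u,v) F))\<^sup>*\<^sup>* x y"
  shows "(ER F)\<^sup>*\<^sup>* x y \<or> (((ER F)\<^sup>*\<^sup>* x u \<or> (ER F)\<^sup>*\<^sup>* x v) \<and> ((ER F)\<^sup>*\<^sup>* u y \<or> (ER F)\<^sup>*\<^sup>* v y))"
  using assms
proof (induction rule: rtranclp_induct)
  case base then show ?case by simp
next
  case (step y z)
  have e: "ER F y z \<or> (y = u \<and> z = v) \<or> (y = v \<and> z = u)" using step(2) unfolding ER_def by auto
  from step(3) show ?case
  proof
    assume xy: "(ER F)\<^sup>*\<^sup>* x y"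
    from e show ?thesis
    proof (elim disjE)
      assume "ER F y z" thus ?thesis using xy by (meson rtranclp.rtrancl_into_rtrancl)
    qed (use xy in auto)
  next
    assume h: "((ER F)\<^sup>*\<^sup>* x u \<or> (ER F)\<^sup>*\<^sup>* x v) \<and> ((ER F)\<^sup>*\<^sup>* u y \<or> (ER F)\<^sup>*\<^sup>* v y)"
    from e show ?thesis
    proof (elim disjE)
      assume "ER F y z" thus ?thesis using h by (meson rtranclp.rtrancl_into_rtrancl)
    qed (use h in auto)
  qed
qed

lemma ER_empty: "(ER {})\<^sup>*\<^sup>* x y \<Longrightarrow> x = y"
  by (induction rule: rtranclp_induct) (auto simp: ER_def)

lemma comp_count:
  assumes "finite F" "finite N"
  shows "card N \<le> card (cls N F ` N) + card F"
  using assms(1)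
proof (induction rule: finite_induct)
  case empty
  have "cls N {} ` N = (\<lambda>x. {x}) ` N"
  proof (rule image_cong[OF refl])
    fix x assume x: "x \<in> N"
    show "cls N {} x = {x}"
    proof (intro equalityI subsetI)
      fix y assume "y \<in> cls N {} x" thus "y \<in> {x}" unfolding cls_def using ER_empty[of x y] by simp
    qed (use x in \<open>auto simp: cls_def\<close>)
  qed
  moreover have "card ((\<lambda>x. {x}) ` N) = card N" by (rule card_image) (auto simp: inj_on_def)
  ultimately show ?case by simp
next
  case (insert e F)
  obtain u v where e: "e = (u,v)" by (cases e)
  let ?F' = "insert e F"
  define N1 where "N1 = {x \<in> N. cls N F x = cls N F u}"
  define N2 where "N2 = N - N1"
  have fin: "finite N1" "finite N2" using assms(2) unfolding N1_def N2_def by auto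
  have "cls N F ` N = cls N F ` N1 \<union> cls N F ` N2" unfolding N1_def N2_def by auto
  hence "card (cls N F ` N) \<le> card (cls N F ` N1) + card (cls N F ` N2)"
    by (metis card_Un_le)
  moreover have "card (cls N F ` N1) \<le> 1"
  proof -
    have "cls N F ` N1 \<subseteq> {cls N F u}" unfolding N1_def by auto
    thus ?thesis by (metis card.empty card.insert card_mono empty_iff finite.intros(1) finite.intros(2) One_nat_def)
  qed
  moreover have "card (cls N F ` N2) \<le> card (cls N ?F' ` N2)"
  proof (rule card_image_factor[OF fin(2)])
    fix x y assume x: "x \<in> N2" and y: "y \<in> N2" and eq: "cls N ?F' x = cls N ?F' y"
    have "y \<in> cls N ?F' y" using y unfolding N2_def cls_def by auto
    hence "(ER (insert (u,v) F))\<^sup>*\<^sup>* x y" using eq unfolding cls_def e by auto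
    from ER_insert_reach[OF this]
    have r: "(ER F)\<^sup>*\<^sup>* x y \<or> (((ER F)\<^sup>*\<^sup>* x u \<or> (ER F)\<^sup>*\<^sup>* x v) \<and> ((ER F)\<^sup>*\<^sup>* u y \<or> (ER F)\<^sup>*\<^sup>* v y))" .
    have nxu: "\<not> (ER F)\<^sup>*\<^sup>* x u" using x cls_eq[of F x u N] unfolding N2_def N1_def by auto
    have nuy: "\<not> (ER F)\<^sup>*\<^sup>* u y" using y cls_eq[of F u y N] unfolding N2_def N1_def by auto
    have "(ER F)\<^sup>*\<^sup>* x y" using r nxu nuy by (meson rtranclp_trans)
    thus "cls N F x = cls N F y" by (rule cls_eq)
  qed
  moreover have "card (cls N ?F' ` N2) \<le> card (cls N ?F' ` N)"
    by (rule card_mono) (use assms(2) N2_def in auto)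
  ultimately show ?case using insert by simp
qed

lemma conn_card:
  assumes "finite F" "finite N" "N \<noteq> {}" "\<forall>x\<in>N. \<forall>y\<in>N. (ER F)\<^sup>*\<^sup>* x y"
  shows "card N \<le> card F + 1"
proof -
  have "cls N F ` N = {N}" using assms(3,4) unfolding cls_def by auto
  thus ?thesis using comp_count[OF assms(1,2)] by simp
qed

lemma ER_edges:
  assumes "simple_graph m R"
  shows "ER {(i,j). R i j \<and> i < j} = R"
proof (intro ext)
  fix x y
  show "ER {(i,j). R i j \<and> i < j} x y = R x y"
    using assms unfolding ER_def simple_graph_def by (auto, metis linorder_neqE_nat)
qed

definition rem :: "(nat \<Rightarrow> nat \<Rightarrow> bool) \<Rightarrow> nat \<Rightarrow> nat \<Rightarrow> nat \<Rightarrow> nat \<Rightarrow> bool" where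
  "rem T a b = (\<lambda>x y. T x y \<and> \<not> ((x = a \<and> y = b) \<or> (x = b \<and> y = a)))"

lemma tree_edge: "is_tree m T \<Longrightarrow> T a b \<Longrightarrow> a < m \<and> b < m \<and> a \<noteq> b \<and> T b a"
  unfolding is_tree_def simple_graph_def by blast

lemma rem_sym: "is_tree m T \<Longrightarrow> rem T a b x y \<Longrightarrow> rem T a b y x"
  unfolding rem_def using tree_edge by blast

lemma tree_acyclic:
  assumes tree: "is_tree m T" and ab: "T a b"
  shows "\<not> (rem T a b)\<^sup>*\<^sup>* b a"
proof
  assume ba: "(rem T a b)\<^sup>*\<^sup>* b a"
  let ?R = "rem T a b"
  have ab': "(rem T a b)\<^sup>*\<^sup>* a b" using rtranclp_sym'[of ?R, OF _ ba] rem_sym[OF tree] by blast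
  have e: "a < m" "b < m" "a \<noteq> b" "T b a" using tree_edge[OF tree ab] by auto
  have sgR: "simple_graph m ?R" using tree unfolding is_tree_def simple_graph_def rem_def by blast
  have conn: "?R\<^sup>*\<^sup>* x y" if "T\<^sup>*\<^sup>* x y" for x y
    using that
  proof (induction rule: rtranclp_induct)
    case base then show ?case by simp
  next
    case (step y z)
    show ?case
    proof (cases "(y = a \<and> z = b) \<or> (y = b \<and> z = a)")
      case True
      then show ?thesis using step(3) ab' ba by (auto intro: rtranclp_trans)
    next
      case False
      then have "?R y z" using step(2) unfolding rem_def by auto
      then show ?thesis using step(3) by (meson rtranclp.rtrancl_into_rtrancl)
    qed
  qed
  define F where "F = {(i,j). T i j \<and> i < j}"
  define F' where "F' = {(i,j). ?R i j \<and> i < j}"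
  have finF: "finite F" unfolding F_def
    by (rule finite_subset[of _ "{0..<m} \<times> {0..<m}"]) (use tree in \<open>auto simp: is_tree_def simple_graph_def\<close>)
  have cardF: "card F = m - 1" using tree unfolding is_tree_def F_def by auto
  have F'eq: "F' = F - {(min a b, max a b)}" unfolding F'_def F_def rem_def by (auto simp: min_def max_def)
  have mem: "(min a b, max a b) \<in> F" unfolding F_def using ab e by (auto simp: min_def max_def)
  have cardF': "card F' = m - 2" unfolding F'eq using card_Diff_singleton[OF mem] cardF by simp
  have finF': "finite F'" unfolding F'eq using finF by simp
  have "card {0..<m} \<le> card F' + 1"
  proof (rule conn_card[OF finF'])
    show "{0..<m} \<noteq> {}" using e by auto
    show "\<forall>x\<in>{0..<m}. \<forall>y\<in>{0..<m}. (ER F')\<^sup>*\<^sup>* x y"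
      unfolding F'_def ER_edges[OF sgR] using conn tree unfolding is_tree_def by auto
  qed simp
  thus False using cardF' e by simp
qed


definition av :: "(nat \<Rightarrow> nat \<Rightarrow> bool) \<Rightarrow> nat \<Rightarrow> nat \<Rightarrow> nat \<Rightarrow> bool" where
  "av T t = (\<lambda>x y. T x y \<and> x \<noteq> t \<and> y \<noteq> t)"

definition Dset :: "nat \<Rightarrow> nat \<Rightarrow> (nat \<Rightarrow> nat \<Rightarrow> bool) \<Rightarrow> (nat \<Rightarrow> nat set) \<Rightarrow> nat \<Rightarrow> nat \<Rightarrow> nat set" where
  "Dset n m T B t t' = {v. v < n \<and> v \<notin> B t \<and> (\<exists>s<m. v \<in> B s \<and> (av T t)\<^sup>*\<^sup>* t' s)}"

lemma rt_mono:
  assumes "\<And>a b. r a b \<Longrightarrow> s a b" and "r\<^sup>*\<^sup>* x y"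
  shows "s\<^sup>*\<^sup>* x y"
  using assms(2) by (induction rule: rtranclp_induct) (auto intro: rtranclp.rtrancl_into_rtrancl assms(1))

lemma av_rem1: "(av T t)\<^sup>*\<^sup>* x y \<Longrightarrow> (rem T t t')\<^sup>*\<^sup>* x y"
  by (rule rt_mono[of "av T t"]) (auto simp: av_def rem_def)

lemma av_rem2: "(av T t')\<^sup>*\<^sup>* x y \<Longrightarrow> (rem T t t')\<^sup>*\<^sup>* x y"
  by (rule rt_mono[of "av T t'"]) (auto simp: av_def rem_def)

lemma av_sym: "is_tree m T \<Longrightarrow> (av T t)\<^sup>*\<^sup>* x y \<Longrightarrow> (av T t)\<^sup>*\<^sup>* y x"
  by (rule rtranclp_sym'[of "av T t"]) (auto simp: av_def dest: tree_edge)

lemma first_step: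
  assumes "T\<^sup>*\<^sup>* t s" "s \<noteq> t"
  shows "\<exists>t'. T t t' \<and> (av T t)\<^sup>*\<^sup>* t' s"
  using assms
proof (induction rule: rtranclp_induct)
  case base then show ?case by simp
next
  case (step y z)
  show ?case
  proof (cases "y = t")
    case True
    then show ?thesis using step by auto
  next
    case False
    then obtain t' where "T t t'" "(av T t)\<^sup>*\<^sup>* t' y" using step by auto
    moreover have "av T t y z" using False step by (auto simp: av_def)
    ultimately show ?thesis by (meson rtranclp.rtrancl_into_rtrancl)
  qed
qed

lemma greedy:
  fixes f :: "'a \<Rightarrow> nat"
  assumes "finite I" "\<forall>i\<in>I. 4 * f i < M" "M \<le> 4 * sum f I" "M > 0"
  shows "\<exists>J\<subseteq>I. M \<le> 4 * sum f J \<and> 4 * sum f J < 2 * M"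
  using assms
proof (induction rule: finite_induct)
  case empty then show ?case by simp
next
  case (insert i I)
  show ?case
  proof (cases "M \<le> 4 * sum f I")
    case True
    then obtain J where "J \<subseteq> I" "M \<le> 4 * sum f J \<and> 4 * sum f J < 2 * M" using insert by auto
    then show ?thesis by (intro exI[of _ J]) auto
  next
    case False
    then show ?thesis using insert by (intro exI[of _ "insert i I"]) auto
  qed
qed

context
  fixes n E m T B
  assumes td: "tree_decomposition n E m T B"
begin

lemma tree: "is_tree m T" using td unfolding tree_decomposition_def by auto
lemma bags: "t < m \<Longrightarrow> B t \<subseteq> {0..<n}" using td unfolding tree_decomposition_def by auto
lemma cover: "v < n \<Longrightarrow> \<exists>t<m. v \<in> B t" using td unfolding tree_decomposition_def by auto
lemma edge_bag: "E u v \<Longrightarrow> \<exists>t<m. u \<in> B t \<and> v \<in> B t" using td unfolding tree_decomposition_def by auto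

lemma occ_av:
  assumes "v < n" "s1 < m" "s2 < m" "v \<in> B s1" "v \<in> B s2" "v \<notin> B t"
  shows "(av T t)\<^sup>*\<^sup>* s1 s2"
proof -
  have "connected_in T {s. s < m \<and> v \<in> B s}" using td assms(1) unfolding tree_decomposition_def by auto
  hence "(\<lambda>a b. T a b \<and> a \<in> {s. s < m \<and> v \<in> B s} \<and> b \<in> {s. s < m \<and> v \<in> B s})\<^sup>*\<^sup>* s1 s2"
    using assms unfolding connected_in_def by auto
  thus ?thesis by (rule rt_mono[rotated]) (use assms(6) in \<open>auto simp: av_def\<close>)
qed

abbreviation D where "D \<equiv> Dset n m T B"

lemma D_sub: "D t t' \<subseteq> {0..<n}" unfolding Dset_def by auto
lemma D_notin: "v \<in> D t t' \<Longrightarrow> v \<notin> B t" unfolding Dset_def by auto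

lemma F1:
  assumes tt': "T t t'" and u: "u \<in> D t t'" and uv: "E u v" and v: "v < n" "v \<notin> D t t'"
  shows "v \<in> B t \<and> v \<in> B t'"
proof -
  obtain s0 where s0: "s0 < m" "u \<in> B s0" "v \<in> B s0" using edge_bag[OF uv] by auto
  from u obtain s1 where s1: "u < n" "u \<notin> B t" "s1 < m" "u \<in> B s1" "(av T t)\<^sup>*\<^sup>* t' s1"
    unfolding Dset_def by auto
  have "(av T t)\<^sup>*\<^sup>* s1 s0" by (rule occ_av) (use s0 s1 in auto)
  hence p1: "(av T t)\<^sup>*\<^sup>* t' s0" using s1(5) by (meson rtranclp_trans)
  have vt: "v \<in> B t"
  proof (rule ccontr)
    assume "v \<notin> B t"
    hence "v \<in> D t t'" unfolding Dset_def using v(1) s0 p1 by auto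
    thus False using v(2) by simp
  qed
  have tm: "t < m" using tree_edge[OF tree tt'] by auto
  have "v \<in> B t'"
  proof (rule ccontr)
    assume nv: "v \<notin> B t'"
    have "(av T t')\<^sup>*\<^sup>* s0 t" by (rule occ_av) (use s0 vt v nv tm in auto)
    hence "(rem T t t')\<^sup>*\<^sup>* s0 t" by (rule av_rem2)
    moreover have "(rem T t t')\<^sup>*\<^sup>* t' s0" using p1 by (rule av_rem1)
    ultimately have "(rem T t t')\<^sup>*\<^sup>* t' t" by (meson rtranclp_trans)
    thus False using tree_acyclic[OF tree tt'] by simp
  qed
  thus ?thesis using vt by simp
qed

lemma F2:
  assumes tt': "T t t'" and v1: "v \<in> D t t'" and v2: "v \<in> D t' t"
  shows False
proof -
  from v1 obtain s1 where s1: "v < n" "v \<notin> B t" "s1 < m" "v \<in> B s1" "(av T t)\<^sup>*\<^sup>* t' s1"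
    unfolding Dset_def by auto
  from v2 obtain s2 where s2: "v \<notin> B t'" "s2 < m" "v \<in> B s2" "(av T t')\<^sup>*\<^sup>* t s2"
    unfolding Dset_def by auto
  have "(av T t)\<^sup>*\<^sup>* s1 s2" by (rule occ_av) (use s1 s2 in auto)
  hence a: "(rem T t t')\<^sup>*\<^sup>* s1 s2" by (rule av_rem1)
  have b: "(rem T t t')\<^sup>*\<^sup>* t' s1" using s1(5) by (rule av_rem1)
  have "(av T t')\<^sup>*\<^sup>* s2 t" using av_sym[OF tree s2(4)] .
  hence c: "(rem T t t')\<^sup>*\<^sup>* s2 t" by (rule av_rem2)
  have "(rem T t t')\<^sup>*\<^sup>* t' t" using a b c by (meson rtranclp_trans)
  thus False using tree_acyclic[OF tree tt'] by simp
qed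

lemma F3:
  assumes "t < m" "v < n" "v \<notin> B t"
  shows "\<exists>t'. T t t' \<and> v \<in> D t t'"
proof -
  obtain s where s: "s < m" "v \<in> B s" using cover[OF assms(2)] by auto
  have "s \<noteq> t" using s assms by auto
  moreover have "T\<^sup>*\<^sup>* t s" using tree s assms(1) unfolding is_tree_def by auto
  ultimately obtain t' where "T t t'" "(av T t)\<^sup>*\<^sup>* t' s" using first_step by blast
  thus ?thesis using s assms unfolding Dset_def by auto
qed

lemma F4:
  assumes t1: "T t t1" and t2: "T t t2" and ne: "t1 \<noteq> t2" and v1: "v \<in> D t t1" and v2: "v \<in> D t t2"
  shows False
proof -
  from v1 obtain s1 where s1: "v < n" "v \<notin> B t" "s1 < m" "v \<in> B s1" "(av T t)\<^sup>*\<^sup>* t1 s1"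
    unfolding Dset_def by auto
  from v2 obtain s2 where s2: "s2 < m" "v \<in> B s2" "(av T t)\<^sup>*\<^sup>* t2 s2"
    unfolding Dset_def by auto
  have "(av T t)\<^sup>*\<^sup>* s1 s2" by (rule occ_av) (use s1 s2 in auto)
  moreover have "(av T t)\<^sup>*\<^sup>* s2 t2" using av_sym[OF tree s2(3)] .
  ultimately have "(av T t)\<^sup>*\<^sup>* t1 t2" using s1(5) by (meson rtranclp_trans)
  hence "(av T t)\<^sup>*\<^sup>* t2 t1" using av_sym[OF tree] by blast
  hence p: "(rem T t t2)\<^sup>*\<^sup>* t2 t1" by (rule av_rem1)
  have e1: "T t1 t" "t1 \<noteq> t" using tree_edge[OF tree t1] by auto
  have "rem T t t2 t1 t" unfolding rem_def using e1 ne by auto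
  hence "(rem T t t2)\<^sup>*\<^sup>* t2 t" using p by (meson rtranclp.rtrancl_into_rtrancl)
  thus False using tree_acyclic[OF tree t2] by simp
qed

lemma F5:
  assumes t1: "T t t1" and t2: "T t t2" and ne: "t1 \<noteq> t2" and u: "u \<in> D t t1" and v: "v \<in> D t t2"
    and uv: "E u v"
  shows False
proof -
  obtain s0 where s0: "s0 < m" "u \<in> B s0" "v \<in> B s0" using edge_bag[OF uv] by auto
  from u obtain s1 where s1: "u < n" "u \<notin> B t" "s1 < m" "u \<in> B s1" "(av T t)\<^sup>*\<^sup>* t1 s1"
    unfolding Dset_def by auto
  have "(av T t)\<^sup>*\<^sup>* s1 s0" by (rule occ_av) (use s0 s1 in auto)
  hence p1: "(av T t)\<^sup>*\<^sup>* t1 s0" using s1(5) by (meson rtranclp_trans)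
  have "v \<in> D t t1" using v s0 p1 unfolding Dset_def by auto
  thus False using F4[OF t1 t2 ne _ v] by simp
qed

lemma sink:
  "\<exists>t<m. \<forall>t'. T t t' \<longrightarrow> card (D t t') \<le> card (D t' t)"
proof (rule ccontr)
  let ?o = "\<lambda>a b. card (D a b) > card (D b a) \<or> (card (D a b) = card (D b a) \<and> a < b)"
  assume "\<not> ?thesis"
  hence "\<forall>t<m. \<exists>t'. T t t' \<and> ?o t t'" by (auto simp: not_le)
  then obtain f where f: "\<And>t. t < m \<Longrightarrow> T t (f t) \<and> ?o t (f t)" by metis
  define g where "g = (\<lambda>t. (min t (f t), max t (f t)))"
  define F where "F = {(i,j). T i j \<and> i < j}"
  have finF: "finite F" unfolding F_def
    by (rule finite_subset[of _ "{0..<m} \<times> {0..<m}"]) (use tree in \<open>auto simp: is_tree_def simple_graph_def\<close>)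
  have cardF: "card F = m - 1" using tree unfolding is_tree_def F_def by auto
  have m1: "m \<ge> 1" using tree unfolding is_tree_def by auto
  have "g ` {0..<m} \<subseteq> F"
  proof
    fix x assume "x \<in> g ` {0..<m}"
    then obtain t where t: "t < m" "x = g t" by auto
    have "T t (f t)" "T (f t) t" "t \<noteq> f t" using f[OF t(1)] tree_edge[OF tree] by auto
    thus "x \<in> F" unfolding t g_def F_def by (auto simp: min_def max_def)
  qed
  moreover have "inj_on g {0..<m}"
  proof (rule inj_onI)
    fix t1 t2 assume t1: "t1 \<in> {0..<m}" and t2: "t2 \<in> {0..<m}" and eq: "g t1 = g t2"
    show "t1 = t2"
    proof (rule ccontr)
      assume ne: "t1 \<noteq> t2"
      have n1: "t1 \<noteq> f t1" using f t1 tree_edge[OF tree] by auto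
      have n2: "t2 \<noteq> f t2" using f t2 tree_edge[OF tree] by auto
      have a: "t1 = f t2 \<and> t2 = f t1" using eq ne n1 n2 unfolding g_def
        by (auto simp: min_def max_def split: if_splits)
      have h1: "?o t1 (f t1)" using f[of t1] t1 by simp
      have h2: "?o t2 (f t2)" using f[of t2] t2 by simp
      have "?o t1 t2" using h1 a by metis
      moreover have "?o t2 t1" using h2 a by metis
      ultimately show False by linarith
    qed
  qed
  ultimately have "card {0..<m} \<le> card F" using card_inj_on_le[OF _ _ finF] by blast
  thus False using cardF m1 by simp
qed

lemma separator:
  assumes sg: "simple_graph n E" and Kb: "\<forall>t<m. card (B t) \<le> K"
  shows "\<exists>A Bs. A \<subseteq> {0..<n} \<and> Bs \<subseteq> {0..<n} \<and> A \<inter> Bs = {} \<and> card ({0..<n} - A - Bs) \<le> K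
     \<and> (\<forall>u v. E u v \<longrightarrow> u \<in> A \<longrightarrow> v \<notin> Bs) \<and> (\<forall>u v. E u v \<longrightarrow> u \<in> Bs \<longrightarrow> v \<notin> A)
     \<and> n \<le> 4 * card A + K \<and> n \<le> 4 * card Bs + K"
proof (cases "n \<le> K")
  case True
  then show ?thesis by (intro exI[of _ "{}"]) auto
next
  case False
  define M where "M = n - K"
  have M0: "M > 0" using False unfolding M_def by simp
  obtain t where t: "t < m" "\<forall>t'. T t t' \<longrightarrow> card (D t t') \<le> card (D t' t)" using sink by auto
  have Btn: "B t \<subseteq> {0..<n}" using bags[OF t(1)] .
  have finBt: "finite (B t)" using Btn finite_subset by blast
  have Esym: "E u v \<Longrightarrow> E v u" for u v using sg unfolding simple_graph_def by auto
  have Ev: "E u v \<Longrightarrow> v < n" for u v using sg unfolding simple_graph_def by auto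
  show ?thesis
  proof (cases "\<exists>t'. T t t' \<and> M \<le> 4 * card (D t t')")
    case True
    then obtain t' where t': "T t t'" "M \<le> 4 * card (D t t')" by auto
    define A where "A = D t t'"
    define Bs where "Bs = {0..<n} - (B t \<inter> B t') - A"
    have X: "{0..<n} - A - Bs \<subseteq> B t" unfolding Bs_def by auto
    have cX: "card ({0..<n} - A - Bs) \<le> K"
      using card_mono[OF finBt X] Kb t(1) by (meson le_trans)
    have DB: "D t' t \<subseteq> Bs" unfolding Bs_def A_def
      using D_sub[of t' t] D_notin[of _ t' t] F2[OF t'(1)] by auto
    have "card (D t' t) \<le> card Bs" by (rule card_mono[OF _ DB]) (simp add: Bs_def)
    hence cB: "card (D t t') \<le> card Bs" using t(2) t'(1) by (meson le_trans)
    have e1: "\<forall>u v. E u v \<longrightarrow> u \<in> A \<longrightarrow> v \<notin> Bs"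
    proof (intro allI impI)
      fix u v assume uv: "E u v" and u: "u \<in> A"
      show "v \<notin> Bs"
      proof
        assume v: "v \<in> Bs"
        have "v \<in> B t \<and> v \<in> B t'" by (rule F1[OF t'(1) _ uv]) (use u v in \<open>auto simp: A_def Bs_def\<close>)
        thus False using v unfolding Bs_def by auto
      qed
    qed
    have e2: "\<forall>u v. E u v \<longrightarrow> u \<in> Bs \<longrightarrow> v \<notin> A" using e1 Esym by blast
    show ?thesis
      apply (rule exI[of _ A], rule exI[of _ Bs])
      using cX e1 e2 t'(2) cB D_sub[of t t'] unfolding M_def A_def Bs_def by auto
  next
    case False
    hence small: "\<forall>t'\<in>{t'. T t t'}. 4 * card (D t t') < M" by auto
    define I where "I = {t'. T t t'}"
    have finI: "finite I" unfolding I_def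
      by (rule finite_subset[of _ "{0..<m}"]) (use tree_edge[OF tree] in auto)
    have finD: "finite (D t t')" for t' using D_sub finite_subset by blast
    have disj: "D t i \<inter> D t j = {}" if "i \<in> I" "j \<in> I" "i \<noteq> j" for i j
      using F4[of t i j] that unfolding I_def by blast
    have cardU: "card (\<Union>i\<in>J. D t i) = sum (\<lambda>i. card (D t i)) J" if "J \<subseteq> I" for J
    proof (rule card_UN_disjoint)
      show "finite J" using that finI finite_subset by blast
      show "\<forall>i\<in>J. finite (D t i)" using finD by blast
      show "\<forall>i\<in>J. \<forall>j\<in>J. i \<noteq> j \<longrightarrow> D t i \<inter> D t j = {}" using disj that by blast
    qed
    have U: "(\<Union>i\<in>I. D t i) = {0..<n} - B t"
    proof
      show "(\<Union>i\<in>I. D t i) \<subseteq> {0..<n} - B t" using D_sub D_notin by blast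
      show "{0..<n} - B t \<subseteq> (\<Union>i\<in>I. D t i)" using F3[OF t(1)] unfolding I_def by auto
    qed
    have "card ({0..<n} - B t) = n - card (B t)" using card_Diff_subset[OF finBt Btn] by simp
    hence "M \<le> card ({0..<n} - B t)" using Kb t(1) unfolding M_def by auto
    hence MI: "M \<le> sum (\<lambda>i. card (D t i)) I" using cardU[of I] U by simp
    obtain J where J: "J \<subseteq> I" "M \<le> 4 * sum (\<lambda>i. card (D t i)) J" "4 * sum (\<lambda>i. card (D t i)) J < 2 * M"
      using greedy[OF finI small[folded I_def]] MI M0 by auto
    define A where "A = (\<Union>i\<in>J. D t i)"
    define Bs where "Bs = (\<Union>i\<in>I - J. D t i)"
    have cA: "card A = sum (\<lambda>i. card (D t i)) J" unfolding A_def using cardU[OF J(1)] .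
    have cBs: "card Bs = sum (\<lambda>i. card (D t i)) (I - J)" unfolding Bs_def using cardU[of "I - J"] by auto
    have ssum: "sum (\<lambda>i. card (D t i)) I = sum (\<lambda>i. card (D t i)) (I - J) + sum (\<lambda>i. card (D t i)) J"
      using sum.subset_diff[OF J(1) finI] by simp
    have AB: "A \<union> Bs = {0..<n} - B t" unfolding A_def Bs_def using U J(1) by blast
    have X: "{0..<n} - A - Bs \<subseteq> B t" using AB by auto
    have cX: "card ({0..<n} - A - Bs) \<le> K"
      using card_mono[OF finBt X] Kb t(1) by (meson le_trans)
    have dAB: "A \<inter> Bs = {}" unfolding A_def Bs_def using disj J(1) by blast
    have e1: "\<forall>u v. E u v \<longrightarrow> u \<in> A \<longrightarrow> v \<notin> Bs"
    proof (intro allI impI notI)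
      fix u v assume uv: "E u v" and u: "u \<in> A" and v: "v \<in> Bs"
      obtain i where i: "i \<in> J" "u \<in> D t i" using u unfolding A_def by auto
      obtain j where j: "j \<in> I - J" "v \<in> D t j" using v unfolding Bs_def by auto
      show False using F5[of t i j u v] i j J(1) uv unfolding I_def by blast
    qed
    have e2: "\<forall>u v. E u v \<longrightarrow> u \<in> Bs \<longrightarrow> v \<notin> A" using e1 Esym by blast
    have sub: "A \<subseteq> {0..<n}" "Bs \<subseteq> {0..<n}" using AB by auto
    show ?thesis
      apply (rule exI[of _ A], rule exI[of _ Bs])
      using cX e1 e2 dAB sub cA cBs ssum J MI unfolding M_def by auto
  qed
qed

end



definition qf :: "nat \<Rightarrow> (nat \<Rightarrow> nat \<Rightarrow> bool) \<Rightarrow> (nat \<Rightarrow> real) \<Rightarrow> real" where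
  "qf n E f = (\<Sum>u=0..<n. \<Sum>v=0..<n. if E u v then (f u - f v)\<^sup>2 else 0)"

lemma lap_carrier: "laplacian n E \<in> carrier_mat n n"
  unfolding laplacian_def by simp

lemma lap_sym: assumes "simple_graph n E" shows "transpose_mat (laplacian n E) = laplacian n E"
  by (rule eq_matI) (use assms in \<open>auto simp: laplacian_def simple_graph_def\<close>)

lemma lap_mult:
  assumes sg: "simple_graph n E" and u: "u < n"
  shows "(laplacian n E *\<^sub>v vec n f) $ u = (\<Sum>v=0..<n. if E u v then f u - f v else 0)"
proof -
  have nE: "\<not> E u u" using sg unfolding simple_graph_def by auto
  have "(laplacian n E *\<^sub>v vec n f) $ u = (\<Sum>v=0..<n. laplacian n E $$ (u,v) * f v)"
    using u by (simp add: laplacian_def scalar_prod_def)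
  also have "\<dots> = (\<Sum>v=0..<n. (if v = u then real (degree_in n E u) * f u else 0) - (if E u v then f v else 0))"
    by (rule sum.cong) (use u nE in \<open>auto simp: laplacian_def\<close>)
  also have "\<dots> = real (degree_in n E u) * f u - (\<Sum>v=0..<n. if E u v then f v else 0)"
    using u by (simp add: sum_subtractf)
  also have "real (degree_in n E u) = (\<Sum>v=0..<n. if E u v then 1 else 0)"
    unfolding degree_in_def by (simp add: sum.If_cases, rule arg_cong[where f=card], auto)
  also have "(\<Sum>v=0..<n. if E u v then 1 else 0) * f u - (\<Sum>v=0..<n. if E u v then f v else 0)
      = (\<Sum>v=0..<n. if E u v then f u - f v else 0)"
    by (simp add: sum_distrib_right sum_subtractf[symmetric] if_distrib, rule sum.cong, auto)
  finally show ?thesis .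
qed

lemma lap_quad:
  assumes sg: "simple_graph n E"
  shows "vec n f \<bullet> (laplacian n E *\<^sub>v vec n f) = qf n E f / 2"
proof -
  have Esym: "E u v = E v u" for u v using sg unfolding simple_graph_def by auto
  define S where "S = (\<Sum>u=0..<n. \<Sum>v=0..<n. if E u v then f u * (f u - f v) else 0)"
  have "vec n f \<bullet> (laplacian n E *\<^sub>v vec n f) = (\<Sum>u=0..<n. f u * (laplacian n E *\<^sub>v vec n f) $ u)"
    using lap_carrier[of n E] by (simp add: scalar_prod_def)
  also have "\<dots> = S" unfolding S_def
  proof (rule sum.cong[OF refl])
    fix u assume "u \<in> {0..<n}"
    hence u: "u < n" by simp
    show "f u * (laplacian n E *\<^sub>v vec n f) $ u = (\<Sum>v=0..<n. if E u v then f u * (f u - f v) else 0)"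
      unfolding lap_mult[OF sg u] by (simp add: sum_distrib_left, rule sum.cong, auto)
  qed
  finally have "vec n f \<bullet> (laplacian n E *\<^sub>v vec n f) = S" .
  moreover have "S = (\<Sum>u=0..<n. \<Sum>v=0..<n. if E u v then f v * (f v - f u) else 0)"
    unfolding S_def by (subst sum.swap) (simp add: Esym)
  ultimately have "2 * (vec n f \<bullet> (laplacian n E *\<^sub>v vec n f)) =
     (\<Sum>u=0..<n. \<Sum>v=0..<n. if E u v then f u * (f u - f v) else 0) + (\<Sum>u=0..<n. \<Sum>v=0..<n. if E u v then f v * (f v - f u) else 0)"
    unfolding S_def by simp
  also have "\<dots> = qf n E f"
    unfolding qf_def sum.distrib[symmetric] by (rule sum.cong, simp, rule sum.cong, auto simp: power2_eq_square algebra_simps)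
  finally show ?thesis by simp
qed

lemma lap_one:
  assumes sg: "simple_graph n E"
  shows "laplacian n E *\<^sub>v vec n (\<lambda>_. 1) = 0\<^sub>v n"
  by (rule eq_vecI) (use lap_mult[OF sg, of _ "\<lambda>_. 1"] lap_carrier[of n E] in auto)


lemma sprod_transpose:
  fixes A :: "real mat"
  assumes A: "A \<in> carrier_mat n n" and x: "x \<in> carrier_vec n" and z: "z \<in> carrier_vec n"
  shows "x \<bullet> (A *\<^sub>v z) = (transpose_mat A *\<^sub>v x) \<bullet> z"
proof -
  have "x \<bullet> (A *\<^sub>v z) = (\<Sum>i=0..<n. \<Sum>j=0..<n. x$i * A $$ (i,j) * z$j)"
    using A x z by (auto simp: scalar_prod_def sum_distrib_left mult_ac intro!: sum.cong)
  also have "\<dots> = (\<Sum>j=0..<n. \<Sum>i=0..<n. x$i * A $$ (i,j) * z$j)" by (rule sum.swap)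
  also have "\<dots> = (\<Sum>j=0..<n. (\<Sum>i=0..<n. A $$ (i,j) * x$i) * z$j)"
    by (simp add: sum_distrib_left sum_distrib_right mult_ac)
  also have "\<dots> = (transpose_mat A *\<^sub>v x) \<bullet> z"
  proof -
    have tj: "(transpose_mat A *\<^sub>v x) $ j = (\<Sum>i=0..<n. A $$ (i,j) * x$i)" if "j < n" for j
      using A x that by (simp add: scalar_prod_def mult.commute)
    have "(transpose_mat A *\<^sub>v x) \<bullet> z = (\<Sum>j=0..<n. (transpose_mat A *\<^sub>v x)$j * z$j)"
      by (simp only: scalar_prod_def carrier_vecD[OF z])
    also have "\<dots> = (\<Sum>j=0..<n. (\<Sum>i=0..<n. A $$ (i,j) * x$i) * z$j)"
      by (rule sum.cong[OF refl]) (simp add: tj)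
    finally show ?thesis by simp
  qed
  finally show ?thesis .
qed

lemma proots_lin_prod: "proots (\<Prod>a\<leftarrow>ds. [:- a, 1:]) = mset (ds :: real list)"
proof (induction ds)
  case Nil then show ?case by simp
next
  case (Cons a ds)
  have nz: "\<And>a. (0::real poly) \<noteq> [:- a, 1:]" by (metis pCons_eq_0_iff one_neq_zero)
  have "(\<Prod>a\<leftarrow>ds. [:- a, 1:]) \<noteq> (0 :: real poly)" unfolding prod_list_zero_iff using nz by auto
  moreover have "[:- a, 1:] \<noteq> (0 :: real poly)" by simp
  ultimately have "proots ([:- a, 1:] * (\<Prod>a\<leftarrow>ds. [:- a, 1:])) = proots [:- a, 1:] + proots (\<Prod>a\<leftarrow>ds. [:- a, 1:])"
    using proots_mult by blast
  then show ?case using Cons by simp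
qed

lemma diagm_index: "i < length ds \<Longrightarrow> j < length ds \<Longrightarrow> diagm ds $$ (i,j) = (if i = j then ds!i else 0)"
  unfolding diagm_def by simp

lemma mat_vec_zero: "(A :: real mat) \<in> carrier_mat n n \<Longrightarrow> A *\<^sub>v 0\<^sub>v n = 0\<^sub>v n"
  by (rule eq_vecI) (auto simp: scalar_prod_def)

lemma diagm_carrier: "length ds = n \<Longrightarrow> diagm ds \<in> carrier_mat n n"
  unfolding diagm_def by simp

lemma lap_eig:
  assumes sg: "simple_graph n E"
  shows "\<exists>U ds. U \<in> carrier_mat n n \<and> length ds = n \<and> U * transpose_mat U = 1\<^sub>m n
    \<and> laplacian n E = U * diagm ds * transpose_mat U \<and> laplacian_eigenvalues n E = sort ds"
proof -
  let ?L = "laplacian n E"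
  obtain U ds where U: "U \<in> carrier_mat n n" "length ds = n" "transpose_mat U * U = 1\<^sub>m n"
     "U * transpose_mat U = 1\<^sub>m n" "transpose_mat U * ?L * U = diagm ds"
    using sym_diag[OF lap_carrier lap_sym[OF sg]] by blast
  have L: "?L \<in> carrier_mat n n" by (rule lap_carrier)
  have Ut: "transpose_mat U \<in> carrier_mat n n" using U(1) by simp
  have D: "diagm ds \<in> carrier_mat n n" using diagm_carrier[OF U(2)] .
  have "U * diagm ds * transpose_mat U = (U * transpose_mat U) * ?L * (U * transpose_mat U)"
    unfolding U(5)[symmetric] using U(1) Ut L
    by (simp add: assoc_mult_mat[of _ n n _ n _ n])
  hence Leq: "?L = U * diagm ds * transpose_mat U" unfolding U(4) using L by simp
  have "similar_mat ?L (diagm ds)"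
    unfolding similar_mat_def similar_mat_wit_def
    by (rule exI[of _ U], rule exI[of _ "transpose_mat U"]) (use U Ut L D Leq in auto)
  hence "char_poly ?L = char_poly (diagm ds)" by (rule char_poly_similar)
  also have "\<dots> = (\<Prod>a\<leftarrow>diag_mat (diagm ds). [:- a, 1:])"
    by (rule char_poly_upper_triangular[OF D]) (auto simp: upper_triangular_def diagm_def)
  also have "diag_mat (diagm ds) = ds"
    unfolding diag_mat_def diagm_def by (rule nth_equalityI) auto
  finally have "laplacian_eigenvalues n E = sort ds"
    unfolding laplacian_eigenvalues_def by (simp add: proots_lin_prod)
  thus ?thesis using U Leq by blast
qed

lemma spec_quad:
  assumes U: "U \<in> carrier_mat n n" "U * transpose_mat U = 1\<^sub>m n" and ds: "length ds = n"
    and L: "L = U * diagm ds * transpose_mat U" and x: "x \<in> carrier_vec n"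
  shows "x \<bullet> (L *\<^sub>v x) = (\<Sum>i=0..<n. ds!i * ((transpose_mat U *\<^sub>v x)$i)\<^sup>2)"
    and "x \<bullet> x = (\<Sum>i=0..<n. ((transpose_mat U *\<^sub>v x)$i)\<^sup>2)"
proof -
  define y where "y = transpose_mat U *\<^sub>v x"
  have Ut: "transpose_mat U \<in> carrier_mat n n" using U(1) by simp
  have y: "y \<in> carrier_vec n" unfolding y_def using Ut x by simp
  have D: "diagm ds \<in> carrier_mat n n" using diagm_carrier[OF ds] .
  have Dy: "(diagm ds *\<^sub>v y) $ i = ds!i * y$i" if "i < n" for i
  proof -
    have "(diagm ds *\<^sub>v y) $ i = (\<Sum>j=0..<n. y$j * diagm ds $$ (i,j))"
      using that y D by (simp add: scalar_prod_def mult.commute)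
    also have "\<dots> = (\<Sum>j=0..<n. (if i = j then ds!i else 0) * y$j)"
      by (rule sum.cong) (use that ds in \<open>auto simp: diagm_index\<close>)
    also have "\<dots> = (\<Sum>j=0..<n. if i = j then ds!i * y$j else 0)" by (rule sum.cong) auto
    also have "\<dots> = ds!i * y$i" using that by (simp add: sum.delta)
    finally show ?thesis .
  qed
  have "L *\<^sub>v x = U *\<^sub>v (diagm ds *\<^sub>v y)" unfolding L y_def using U(1) D Ut x
    by (simp add: assoc_mult_mat_vec[of _ n n _ n])
  hence "x \<bullet> (L *\<^sub>v x) = y \<bullet> (diagm ds *\<^sub>v y)"
    using sprod_transpose[OF U(1) x, of "diagm ds *\<^sub>v y"] D y unfolding y_def by simp
  also have "\<dots> = (\<Sum>i=0..<n. y$i * (diagm ds *\<^sub>v y)$i)"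
    using D by (simp only: scalar_prod_def, simp)
  also have "\<dots> = (\<Sum>i=0..<n. ds!i * (y$i)\<^sup>2)"
    by (rule sum.cong[OF refl]) (simp add: Dy power2_eq_square)
  finally show "x \<bullet> (L *\<^sub>v x) = (\<Sum>i=0..<n. ds!i * ((transpose_mat U *\<^sub>v x)$i)\<^sup>2)" unfolding y_def .
  have "x = (U * transpose_mat U) *\<^sub>v x" using U(2) x by simp
  also have "\<dots> = U *\<^sub>v y" unfolding y_def using U(1) Ut x by simp
  finally have "x \<bullet> x = x \<bullet> (U *\<^sub>v y)" by simp
  also have "\<dots> = y \<bullet> y" using sprod_transpose[OF U(1) x y] unfolding y_def by simp
  also have "\<dots> = (\<Sum>i=0..<n. (y$i)\<^sup>2)" using y by (simp add: scalar_prod_def power2_eq_square)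
  finally show "x \<bullet> x = (\<Sum>i=0..<n. ((transpose_mat U *\<^sub>v x)$i)\<^sup>2)" unfolding y_def .
qed

lemma sort_le_last:
  fixes ds :: "real list"
  assumes "i < length ds"
  shows "ds ! i \<le> sort ds ! (length ds - 1)"
proof -
  have "ds ! i \<in> set (sort ds)" using assms by simp
  then obtain k where k: "k < length (sort ds)" "sort ds ! k = ds ! i" by (metis in_set_conv_nth)
  have "sort ds ! k \<le> sort ds ! (length ds - 1)"
    by (rule sorted_nth_mono) (use k in auto)
  thus ?thesis using k by simp
qed

lemma two_below:
  fixes ds :: "real list"
  assumes "i < length ds" "j < length ds" "i \<noteq> j" "ds ! i < sort ds ! 1" "ds ! j < sort ds ! 1"
  shows False
proof -
  let ?c = "sort ds ! 1"
  let ?s = "sort ds"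
  have "{i, j} \<subseteq> {k. k < length ds \<and> ds ! k < ?c}" using assms by auto
  hence "2 \<le> card {k. k < length ds \<and> ds ! k < ?c}"
    using assms(3) card_mono[of "{k. k < length ds \<and> ds ! k < ?c}" "{i,j}"] by auto
  also have "card {k. k < length ds \<and> ds ! k < ?c} = length (filter (\<lambda>x. x < ?c) ds)"
    by (simp add: length_filter_conv_card)
  also have "\<dots> = length (filter (\<lambda>x. x < ?c) ?s)"
    by (metis mset_filter mset_sort size_mset)
  also have "\<dots> = card {k. k < length ?s \<and> ?s ! k < ?c}"
    by (simp add: length_filter_conv_card)
  also have "\<dots> \<le> card {0::nat}"
  proof (rule card_mono)
    show "{k. k < length ?s \<and> ?s ! k < ?c} \<subseteq> {0}"
    proof
      fix k assume k: "k \<in> {k. k < length ?s \<and> ?s ! k < ?c}"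
      show "k \<in> {0}"
      proof (rule ccontr)
        assume "k \<notin> {0}"
        hence "1 \<le> k" by simp
        hence "?c \<le> ?s ! k" using k by (intro sorted_nth_mono) auto
        thus False using k by simp
      qed
    qed
  qed simp
  finally show False by simp
qed

lemma lam_max:
  assumes sg: "simple_graph n E" and n: "n \<ge> 1" and x: "x \<in> carrier_vec n"
  shows "x \<bullet> (laplacian n E *\<^sub>v x) \<le> (laplacian_eigenvalues n E ! (n - 1)) * (x \<bullet> x)"
proof -
  obtain U ds where U: "U \<in> carrier_mat n n" "length ds = n" "U * transpose_mat U = 1\<^sub>m n"
    "laplacian n E = U * diagm ds * transpose_mat U" "laplacian_eigenvalues n E = sort ds"
    using lap_eig[OF sg] by blast
  note q = spec_quad[OF U(1,3,2,4) x]
  let ?y = "transpose_mat U *\<^sub>v x"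
  have "(\<Sum>i=0..<n. ds!i * (?y$i)\<^sup>2) \<le> (\<Sum>i=0..<n. sort ds ! (n - 1) * (?y$i)\<^sup>2)"
    by (rule sum_mono, rule mult_right_mono) (use sort_le_last[of _ ds] U(2) in auto)
  thus ?thesis unfolding q U(5) by (simp add: sum_distrib_left)
qed

lemma lam_2:
  assumes sg: "simple_graph n E" and n: "n \<ge> 2" and x: "x \<in> carrier_vec n"
    and pos: "laplacian_eigenvalues n E ! 1 > 0" and orth: "x \<bullet> vec n (\<lambda>_. 1) = 0"
  shows "x \<bullet> (laplacian n E *\<^sub>v x) \<ge> (laplacian_eigenvalues n E ! 1) * (x \<bullet> x)"
proof -
  obtain U ds where U: "U \<in> carrier_mat n n" "length ds = n" "U * transpose_mat U = 1\<^sub>m n"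
    "laplacian n E = U * diagm ds * transpose_mat U" "laplacian_eigenvalues n E = sort ds"
    using lap_eig[OF sg] by blast
  let ?l = "sort ds ! 1"
  have l: "?l > 0" using pos U(5) by simp
  note q = spec_quad[OF U(1,3,2,4) x]
  let ?L = "laplacian n E"
  define one where "one = vec n (\<lambda>_. 1::real)"
  have one: "one \<in> carrier_vec n" unfolding one_def by simp
  have Ut: "transpose_mat U \<in> carrier_mat n n" using U(1) by simp
  define y where "y = transpose_mat U *\<^sub>v x"
  define z where "z = transpose_mat U *\<^sub>v one"
  have y: "y \<in> carrier_vec n" and z: "z \<in> carrier_vec n" unfolding y_def z_def using Ut x one by auto
  have D: "diagm ds \<in> carrier_mat n n" using diagm_carrier[OF U(2)] .
  have UtU: "transpose_mat U * U = 1\<^sub>m n" using mat_mult_left_right_inverse[OF U(1) Ut U(3)] .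
  have Dz0: "diagm ds *\<^sub>v z = 0\<^sub>v n"
  proof -
    have "?L *\<^sub>v one = 0\<^sub>v n" unfolding one_def by (rule lap_one[OF sg])
    moreover have "?L *\<^sub>v one = U *\<^sub>v (diagm ds *\<^sub>v z)" unfolding U(4) z_def using U(1) D Ut one
      by (simp add: assoc_mult_mat_vec[of _ n n _ n])
    ultimately have "transpose_mat U *\<^sub>v (U *\<^sub>v (diagm ds *\<^sub>v z)) = 0\<^sub>v n" using mat_vec_zero[OF Ut] by simp
    moreover have "transpose_mat U *\<^sub>v (U *\<^sub>v (diagm ds *\<^sub>v z)) = diagm ds *\<^sub>v z"
      using assoc_mult_mat_vec[OF Ut U(1), of "diagm ds *\<^sub>v z"] UtU D z by simp
    ultimately show ?thesis by simp
  qed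
  have Dz: "ds!i * z$i = 0" if "i < n" for i
  proof -
    have "(diagm ds *\<^sub>v z) $ i = (\<Sum>j=0..<n. z$j * diagm ds $$ (i,j))"
      using that z D by (simp add: scalar_prod_def mult.commute)
    also have "\<dots> = (\<Sum>j=0..<n. (if i = j then ds!i else 0) * z$j)"
      by (rule sum.cong) (use that U(2) in \<open>auto simp: diagm_index\<close>)
    also have "\<dots> = (\<Sum>j=0..<n. if i = j then ds!i * z$j else 0)" by (rule sum.cong) auto
    also have "\<dots> = ds!i * z$i" using that by (simp add: sum.delta)
    finally show ?thesis using Dz0 that by simp
  qed
  have yz: "y \<bullet> z = 0"
  proof -
    have "y \<bullet> z = x \<bullet> (U *\<^sub>v z)" using sprod_transpose[OF U(1) x z] unfolding y_def by simp
    also have "U *\<^sub>v z = one" unfolding z_def using assoc_mult_mat_vec[OF U(1) Ut one] U(3) one by simp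
    finally show ?thesis using orth unfolding one_def by simp
  qed
  have zz: "z \<bullet> z = real n"
  proof -
    have "z \<bullet> z = one \<bullet> (U *\<^sub>v z)" using sprod_transpose[OF U(1) one z] unfolding z_def by simp
    also have "U *\<^sub>v z = one" unfolding z_def using assoc_mult_mat_vec[OF U(1) Ut one] U(3) one by simp
    finally show ?thesis unfolding one_def by (simp add: scalar_prod_def)
  qed
  obtain i0 where i0: "i0 < n" "z $ i0 \<noteq> 0"
  proof (rule ccontr)
    assume "\<not> thesis"
    hence "\<forall>i<n. z $ i = 0" using that by blast
    hence "z \<bullet> z = 0" using z by (simp add: scalar_prod_def)
    thus False using zz n by simp
  qed
  have d0: "ds ! i0 = 0" using Dz[OF i0(1)] i0(2) by simp
  have big: "ds ! i \<ge> ?l" if "i < n" "i \<noteq> i0" for i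
  proof (rule ccontr)
    assume "\<not> ?l \<le> ds ! i"
    thus False using two_below[of i ds i0] that i0 d0 l U(2) by auto
  qed
  have zi: "z $ i = 0" if "i < n" "i \<noteq> i0" for i
    using Dz[OF that(1)] big[OF that] l by auto
  have "y \<bullet> z = (\<Sum>i=0..<n. y$i * z$i)" using z by (simp add: scalar_prod_def)
  also have "\<dots> = y$i0 * z$i0 + (\<Sum>i\<in>{0..<n} - {i0}. y$i * z$i)"
    by (rule sum.remove) (use i0 in auto)
  also have "(\<Sum>i\<in>{0..<n} - {i0}. y$i * z$i) = 0"
    by (rule sum.neutral) (use zi in auto)
  finally have yi0: "y $ i0 = 0" using yz i0 by simp
  have "(\<Sum>i=0..<n. ?l * (y$i)\<^sup>2) \<le> (\<Sum>i=0..<n. ds!i * (y$i)\<^sup>2)"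
  proof (rule sum_mono)
    fix i assume "i \<in> {0..<n}"
    thus "?l * (y$i)\<^sup>2 \<le> ds!i * (y$i)\<^sup>2"
      using big[of i] yi0 by (cases "i = i0") (auto intro: mult_right_mono)
  qed
  thus ?thesis unfolding q U(5) y_def[symmetric] by (simp add: sum_distrib_left)
qed

lemma final_arith:
  fixes a b s K n l2 ln :: real
  assumes a: "a \<ge> 0" and b: "b \<ge> 0" and s: "s \<ge> 0" and n: "n = a + b + s" and sK: "s \<le> K"
    and na: "n \<le> 4 * a + K" and nb: "n \<le> 4 * b + K" and l2: "l2 > 0" and l2n: "l2 \<le> ln" and n0: "n > 0"
    and H: "l2 * ((a + b) - (a - b)\<^sup>2 / n) \<le> ln * ((a + b) - (a + b)\<^sup>2 / n)"
  shows "K * (3 * ln - l2) \<ge> 2 * n * l2"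
proof -
  have K0: "K \<ge> 0" using s sK by linarith
  have H1: "l2 * (n * (a + b) - (a - b)\<^sup>2) \<le> ln * (n * (a + b) - (a + b)\<^sup>2)"
  proof -
    have "n * (l2 * ((a + b) - (a - b)\<^sup>2 / n)) \<le> n * (ln * ((a + b) - (a + b)\<^sup>2 / n))"
      using H n0 by (simp add: mult_left_mono)
    thus ?thesis using n0 by (simp add: algebra_simps)
  qed
  have e1: "n * (a + b) - (a - b)\<^sup>2 = s * (a + b) + 4 * a * b" unfolding n by (simp add: power2_eq_square algebra_simps)
  have e2: "n * (a + b) - (a + b)\<^sup>2 = s * (a + b)" unfolding n by (simp add: power2_eq_square algebra_simps)
  have H2: "4 * l2 * (a * b) \<le> (ln - l2) * s * (a + b)" using H1 unfolding e1 e2 by (simp add: algebra_simps)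
  show ?thesis
  proof (cases "n \<le> K")
    case True
    have "2 * n * l2 \<le> n * (3 * ln - l2)" using l2n n0 by (simp add: algebra_simps)
    also have "\<dots> \<le> K * (3 * ln - l2)" using True l2n l2 by (intro mult_right_mono) auto
    finally show ?thesis .
  next
    case False
    define m where "m = (n - K) / 4"
    have m0: "m > 0" using False unfolding m_def by simp
    have am: "a \<ge> m" and bm: "b \<ge> m" using na nb unfolding m_def by auto
    define N where "N = a + b"
    have N4: "N \<ge> 4 * m" unfolding N_def m_def using n sK by simp
    have N0: "N > 0" using N4 m0 by simp
    have ab1: "a * b \<ge> m * (N - m)"
    proof -
      have "(a - m) * (b - m) \<ge> 0" using am bm by simp
      thus ?thesis unfolding N_def by (simp add: algebra_simps)
    qed
    have ab2: "m * (N - m) \<ge> m * (3 / 4 * N)" using N4 m0 by (intro mult_left_mono) auto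
    have "3 * l2 * m * N = 4 * l2 * (m * (3 / 4 * N))" by simp
    also have "\<dots> \<le> 4 * l2 * (a * b)" using ab1 ab2 l2 by (intro mult_left_mono) auto
    also have "\<dots> \<le> (ln - l2) * s * N" using H2 unfolding N_def .
    also have "\<dots> \<le> (ln - l2) * K * N" using sK l2n N0 by (intro mult_right_mono mult_left_mono) auto
    finally have "3 * l2 * m * N \<le> (ln - l2) * K * N" .
    hence "3 * l2 * m \<le> (ln - l2) * K" using N0 by (simp add: mult.assoc)
    moreover have "3 * l2 * (n - K) = 4 * (3 * l2 * m)" unfolding m_def by simp
    ultimately have "3 * l2 * (n - K) \<le> 4 * ((ln - l2) * K)" by linarith
    hence "3 * l2 * n - 3 * l2 * K \<le> 4 * ln * K - 4 * l2 * K" by (simp add: algebra_simps)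
    hence H3: "3 * l2 * n \<le> K * (4 * ln - l2)" by (simp add: algebra_simps)
    have "3 * (2 * n * l2) \<le> 2 * (K * (4 * ln - l2))" using H3 by simp
    also have "\<dots> \<le> 3 * (K * (3 * ln - l2))"
    proof -
      have "K * (2 * (4 * ln - l2)) \<le> K * (3 * (3 * ln - l2))" using K0 l2n by (intro mult_left_mono) auto
      thus ?thesis by (simp add: algebra_simps)
    qed
    finally have "3 * (2 * n * l2) \<le> 3 * (K * (3 * ln - l2))" .
    thus ?thesis by linarith
  qed
qed


lemma sum_ind: assumes "S \<subseteq> {0..<(n::nat)}" shows "(\<Sum>i=0..<n. if i \<in> S then (1::real) else 0) = real (card S)"
proof -
  have "(\<Sum>i=0..<n. if i \<in> S then (1::real) else 0) = (\<Sum>i\<in>S. 1)"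
    by (rule sum.mono_neutral_cong_right) (use assms in auto)
  thus ?thesis by simp
qed

lemma sum_sq_shift:
  "(\<Sum>i=0..<n. (h i - c)\<^sup>2) = (\<Sum>i=0..<n. (h i)\<^sup>2) - 2 * c * (\<Sum>i=0..<n. h i) + real n * c\<^sup>2"
  by (simp add: power2_diff sum_subtractf sum.distrib sum_distrib_left mult_ac)

lemma vec_sprod: "vec n h \<bullet> vec n k = (\<Sum>i=0..<n. h i * k i)"
  by (simp only: scalar_prod_def dim_vec, rule sum.cong, auto)

lemma qf_shift: "qf n E (\<lambda>i. h i - c) = qf n E h"
  unfolding qf_def by (rule sum.cong[OF refl], rule sum.cong[OF refl]) simp

lemma cut_ineq:
  assumes sg: "simple_graph n E" and n: "n \<ge> 2" and pos: "laplacian_eigenvalues n E ! 1 > 0"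
    and A: "A \<subseteq> {0..<n}" and Bs: "Bs \<subseteq> {0..<n}" and dj: "A \<inter> Bs = {}"
    and e1: "\<forall>u v. E u v \<longrightarrow> u \<in> A \<longrightarrow> v \<notin> Bs" and e2: "\<forall>u v. E u v \<longrightarrow> u \<in> Bs \<longrightarrow> v \<notin> A"
  shows "laplacian_eigenvalues n E ! 1 * ((real (card A) + real (card Bs)) - (real (card A) - real (card Bs))\<^sup>2 / real n)
    \<le> laplacian_eigenvalues n E ! (n - 1) * ((real (card A) + real (card Bs)) - (real (card A) + real (card Bs))\<^sup>2 / real n)"
proof -
  let ?a = "real (card A)" and ?b = "real (card Bs)"
  let ?l2 = "laplacian_eigenvalues n E ! 1" and ?ln = "laplacian_eigenvalues n E ! (n - 1)"
  define f where "f = (\<lambda>i. (if i \<in> A then 1 else 0) - (if i \<in> Bs then (1::real) else 0))"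
  define g where "g = (\<lambda>i. (if i \<in> A then 1 else 0) + (if i \<in> Bs then (1::real) else 0))"
  have fg: "qf n E f = qf n E g"
    unfolding qf_def
  proof (intro sum.cong refl)
    fix u v
    show "(if E u v then (f u - f v)\<^sup>2 else 0) = (if E u v then (g u - g v)\<^sup>2 else 0)"
      using e1 e2 dj unfolding f_def g_def by (auto simp: power2_eq_square)
  qed
  have sf: "(\<Sum>i=0..<n. f i) = ?a - ?b" unfolding f_def
    by (simp add: sum_subtractf sum_ind[OF A] sum_ind[OF Bs])
  have sg2: "(\<Sum>i=0..<n. g i) = ?a + ?b" unfolding g_def
    by (simp add: sum.distrib sum_ind[OF A] sum_ind[OF Bs])
  have f2: "(f i)\<^sup>2 = g i" for i unfolding f_def g_def using dj by (auto simp: power2_eq_square)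
  have g2: "(g i)\<^sup>2 = g i" for i unfolding g_def using dj by (auto simp: power2_eq_square)
  have n0: "real n > 0" using n by simp
  define c where "c = (?a - ?b) / real n"
  define x where "x = vec n (\<lambda>i. f i - c)"
  have x: "x \<in> carrier_vec n" unfolding x_def by simp
  have orth: "x \<bullet> vec n (\<lambda>_. 1) = 0"
    unfolding x_def vec_sprod using n0 by (simp add: sum_subtractf sf c_def)
  have "x \<bullet> x = (\<Sum>i=0..<n. (f i - c)\<^sup>2)" unfolding x_def vec_sprod power2_eq_square ..
  also have "\<dots> = (?a + ?b) - 2 * c * (?a - ?b) + real n * c\<^sup>2" unfolding sum_sq_shift f2 sg2 sf ..
  also have "\<dots> = (?a + ?b) - (?a - ?b)\<^sup>2 / real n" unfolding c_def using n0 by (simp add: field_simps power2_eq_square)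
  finally have xx: "x \<bullet> x = (?a + ?b) - (?a - ?b)\<^sup>2 / real n" .
  have xLx: "x \<bullet> (laplacian n E *\<^sub>v x) = qf n E f / 2"
    unfolding x_def lap_quad[OF sg] qf_shift ..
  have low: "?l2 * ((?a + ?b) - (?a - ?b)\<^sup>2 / real n) \<le> qf n E f / 2"
    using lam_2[OF sg n x pos orth] unfolding xx xLx .
  define c' where "c' = (?a + ?b) / real n"
  define w where "w = vec n (\<lambda>i. g i - c')"
  have w: "w \<in> carrier_vec n" unfolding w_def by simp
  have "w \<bullet> w = (\<Sum>i=0..<n. (g i - c')\<^sup>2)" unfolding w_def vec_sprod power2_eq_square ..
  also have "\<dots> = (?a + ?b) - 2 * c' * (?a + ?b) + real n * c'\<^sup>2" unfolding sum_sq_shift g2 sg2 ..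
  also have "\<dots> = (?a + ?b) - (?a + ?b)\<^sup>2 / real n" unfolding c'_def using n0 by (simp add: field_simps power2_eq_square)
  finally have ww: "w \<bullet> w = (?a + ?b) - (?a + ?b)\<^sup>2 / real n" .
  have wLw: "w \<bullet> (laplacian n E *\<^sub>v w) = qf n E g / 2"
    unfolding w_def lap_quad[OF sg] qf_shift ..
  have up: "qf n E g / 2 \<le> ?ln * ((?a + ?b) - (?a + ?b)\<^sup>2 / real n)"
    using lam_max[OF sg _ w] n unfolding ww wLw by simp
  show ?thesis using low up fg by linarith
qed


lemma triv_td:
  assumes sg: "simple_graph n E"
  shows "tree_decomposition n E 1 (\<lambda>_ _. False) (\<lambda>_. {0..<n})"
  using sg unfolding tree_decomposition_def is_tree_def simple_graph_def connected_in_def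
  by auto

theorem theorem2:
  fixes n :: nat and E :: "nat \<Rightarrow> nat \<Rightarrow> bool"
  assumes "simple_graph n E"
    and "\<exists>u v. E u v"
  shows "real (treewidth n E) \<ge>
           2 * real n * (laplacian_eigenvalues n E ! 1)
             / (3 * (laplacian_eigenvalues n E ! (n - 1)) - laplacian_eigenvalues n E ! 1) - 1"
proof -
  note sg = assms(1)
  obtain u v where uv: "E u v" using assms(2) by auto
  have uvn: "u < n" "v < n" "u \<noteq> v" using sg uv unfolding simple_graph_def by auto
  have n2: "n \<ge> 2" using uvn by linarith
  let ?ev = "laplacian_eigenvalues n E"
  let ?l2 = "?ev ! 1" and ?ln = "?ev ! (n - 1)"
  obtain U ds where U: "U \<in> carrier_mat n n" "length ds = n" "U * transpose_mat U = 1\<^sub>m n"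
    "laplacian n E = U * diagm ds * transpose_mat U" "?ev = sort ds"
    using lap_eig[OF sg] by blast
  have l2ln: "?l2 \<le> ?ln" unfolding U(5) by (rule sorted_nth_mono) (use n2 U(2) in auto)
  have lnpos: "?ln > 0"
  proof -
    define d where "d = (\<lambda>i. if i = u then (1::real) else 0)"
    define x where "x = vec n d"
    have x: "x \<in> carrier_vec n" unfolding x_def by simp
    have "(\<Sum>i=0..<n. d i * d i) = (\<Sum>i=0..<n. if i = u then 1 else 0)" by (rule sum.cong) (auto simp: d_def)
    hence xx: "x \<bullet> x = 1" unfolding x_def vec_sprod using uvn by (simp add: sum.delta)
    have inner_nn: "0 \<le> (\<Sum>b=0..<n. if E a b then (d a - d b)\<^sup>2 else 0)" for a
      by (rule sum_nonneg) auto
    have "1 \<le> (\<Sum>b=0..<n. if E u b then (d u - d b)\<^sup>2 else 0)"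
    proof -
      have "(if E u v then (d u - d v)\<^sup>2 else 0) \<le> (\<Sum>b=0..<n. if E u b then (d u - d b)\<^sup>2 else 0)"
        by (rule member_le_sum) (use uvn in auto)
      thus ?thesis using uv uvn unfolding d_def by simp
    qed
    also have "\<dots> \<le> qf n E d" unfolding qf_def
      by (rule member_le_sum) (use uvn inner_nn in auto)
    finally have "1 \<le> qf n E d" .
    moreover have "x \<bullet> (laplacian n E *\<^sub>v x) = qf n E d / 2" unfolding x_def by (rule lap_quad[OF sg])
    moreover have "x \<bullet> (laplacian n E *\<^sub>v x) \<le> ?ln * (x \<bullet> x)" by (rule lam_max[OF sg _ x]) (use n2 in auto)
    ultimately show ?thesis unfolding xx by linarith
  qed
  define tw where "tw = treewidth n E"
  let ?P = "\<lambda>k. \<exists>m T B. tree_decomposition n E m T B \<and> (\<forall>t<m. card (B t) \<le> k + 1)"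
  have "?P (n - 1 + 0)"
    by (rule exI[of _ 1], rule exI[of _ "\<lambda>_ _. False"], rule exI[of _ "\<lambda>_. {0..<n}"]) (use triv_td[OF sg] n2 in auto)
  hence "?P (LEAST k. ?P k)" by (rule LeastI)
  hence "?P tw" unfolding tw_def treewidth_def .
  then obtain m T B where td: "tree_decomposition n E m T B" and Kb: "\<forall>t<m. card (B t) \<le> tw + 1" by blast
  obtain A Bs where AB: "A \<subseteq> {0..<n}" "Bs \<subseteq> {0..<n}" "A \<inter> Bs = {}" "card ({0..<n} - A - Bs) \<le> tw + 1"
     "\<forall>u v. E u v \<longrightarrow> u \<in> A \<longrightarrow> v \<notin> Bs" "\<forall>u v. E u v \<longrightarrow> u \<in> Bs \<longrightarrow> v \<notin> A"
     "n \<le> 4 * card A + (tw + 1)" "n \<le> 4 * card Bs + (tw + 1)"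
    using separator[OF td sg Kb] by blast
  have den: "3 * ?ln - ?l2 > 0" using l2ln lnpos by linarith
  show ?thesis
  proof (cases "?l2 > 0")
    case False
    have "2 * real n * ?l2 \<le> 0" using False by (simp add: mult_nonneg_nonpos)
    hence "2 * real n * ?l2 / (3 * ?ln - ?l2) \<le> 0" using den by (simp add: divide_nonpos_pos)
    thus ?thesis unfolding tw_def by linarith
  next
    case True
    have H: "?l2 * ((real (card A) + real (card Bs)) - (real (card A) - real (card Bs))\<^sup>2 / real n)
      \<le> ?ln * ((real (card A) + real (card Bs)) - (real (card A) + real (card Bs))\<^sup>2 / real n)"
      by (rule cut_ineq[OF sg n2 True AB(1,2,3,5,6)])
    have fin: "finite (A \<union> Bs)" using AB(1,2) finite_subset by blast
    have "card {0..<n} = card (A \<union> Bs) + card ({0..<n} - (A \<union> Bs))"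
      using card_Diff_subset[OF fin] AB(1,2) card_mono[OF _ , of "{0..<n}" "A \<union> Bs"] by auto
    moreover have "card (A \<union> Bs) = card A + card Bs"
      by (rule card_Un_disjoint) (use AB(1,2,3) finite_subset[OF AB(1)] finite_subset[OF AB(2)] in auto)
    moreover have "{0..<n} - (A \<union> Bs) = {0..<n} - A - Bs" by auto
    ultimately have npart: "n = card A + card Bs + card ({0..<n} - A - Bs)" by simp
    have "real (tw + 1) * (3 * ?ln - ?l2) \<ge> 2 * real n * ?l2"
    proof (rule final_arith[where s = "real (card ({0..<n} - A - Bs))"])
      show "real n = real (card A) + real (card Bs) + real (card ({0..<n} - A - Bs))"
        using npart by (metis of_nat_add)
      show "real (card ({0..<n} - A - Bs)) \<le> real (tw + 1)" using AB(4) by linarith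
      show "real n \<le> 4 * real (card A) + real (tw + 1)" using AB(7) by linarith
      show "real n \<le> 4 * real (card Bs) + real (tw + 1)" using AB(8) by linarith
      show "real n > 0" using n2 by simp
    qed (use True l2ln H in auto)
    hence "2 * real n * ?l2 / (3 * ?ln - ?l2) \<le> real (tw + 1)"
      using den by (simp add: pos_divide_le_eq mult.commute)
    thus ?thesis unfolding tw_def by simp
  qed
qed


end
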